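(* Let $\lambda\in\mathbb R$ with $1+2\lambda\ne0$, and let $\xi$ be a pseudo symmetric measure. Let $\ell=(1,\lambda,\lambda)'$, $\ell_3=(2,-1,-1)'$, $Q_{\xi,3}=\ell_3'V_\xi\ell_3$ and $q_{\xi,3}^*=\ell'V_\xi\ell-(\ell'V_\xi\ell_3)^2\,Q_{\xi,3}^+$ (where $a^+=1/a$ for $a\ne0$ and $0^+=0$). Then for every $\theta\in\mathcal T$ the eigenvalues of $\tilde C_\xi(\theta)$, counted with multiplicity, are $0$ (multiplicity $1$), $(1+2\lambda)^{-2}(t-1)^{-1}q_{\xi,3}^*$ (multiplicity $1$) and $(1+2\lambda)^{-2}(t-1)^{-1}\ell'V_\xi\ell$ (multiplicity $t-2$). Moreover $q_{\xi,3}^*\le\ell'V_\xi\ell$.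
   Context: Fix integers $k\ge 2$ and $t\ge 2$. Let $\mathcal S$ be the set of all $t^k$ sequences $s=(t_1,\dots,t_k)$ with entries $t_j\in\{1,\dots,t\}$. For $s\in\mathcal S$ let $T_s$ be the $k\times t$ matrix with $(j,i)$ entry equal to $1$ if $t_j=i$ and $0$ otherwise; let $H$ be the $k\times k$ matrix with $(i,j)$ entry $1$ if $i\equiv j+1\pmod k$ and $0$ otherwise; put $L_s=HT_s$, $R_s=H'T_s$ (a prime denotes transpose). Let $\Sigma$ be a fixed $k\times k$ positive definite matrix, $1_k$ the all-ones vector, and $\tilde B=\Sigma^{-1}-\Sigma^{-1}1_k1_k'\Sigma^{-1}/(1_k'\Sigma^{-1}1_k)$. With $G_0=T_s,G_1=L_s,G_2=R_s$ define for $0\le i,j\le 2$ the $t\times t$ matrices $C_{sij}=G_i'\tilde BG_j$. A measure is a vector $\xi=(p_s)_{s\in\mathcal S}$ with $p_s\ge0$, $\sum_sp_s=1$. Put $C_{\xi ij}=\sum_sp_sC_{sij}$, $c_{\xi ij}=\operatorname{tr}(C_{\xi ij})$, $V_\xi=(c_{\xi ij})_{0\le i,j\le2}$. The measure $\xi$ is pseudo symmetric if each $C_{\xi ij}$ is completely symmetric, i.e. of the form $aI_t+bJ_t$ with $J_t$ the all-ones matrix. $M^+$ denotes the Moore–Penrose inverse. For $u,w\in\mathbb R^3$ (coordinates indexed $0,1,2$) let $C_\xi[u,w]=\sum_{i,j=0}^2u_iw_jC_{\xi ij}$. Let $\mathcal T=\{x\in\mathbb R^t:1_t'x=0,\ x\ne0\}$.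 For $u\in\mathbb R^3$, vectors $w_1,\dots,w_m\in\mathbb R^3$ ($m\in\{1,2\}$) and $x\in\mathcal T$ define $\mathcal I_\xi(u;w_1,\dots,w_m;x)=C_\xi[u,u]-F'G^+F$, where $F$ is the $m\times t$ matrix whose $a$-th row is $(C_\xi[u,w_a]x)'$ and $G$ is the $m\times m$ matrix with entries $x'C_\xi[w_a,w_b]x$. Undirectional model: the information matrix of $\xi$ for the total treatment effect is $\tilde C_\xi(\theta)=(1+2\lambda)^{-2}\mathcal I_\xi(\ell;\ell_3;\theta)$, $\theta\in\mathcal T$, with $\ell=(1,\lambda,\lambda)'$, $\ell_3=(2,-1,-1)'$. *)

theory Defs
  imports "Jordan_Normal_Form.Char_Poly"
begin

(* Conventions: periods are indexed 0..k-1, treatments 0..t-1 (the paper uses 1..k, 1..t).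
   Matrices are Jordan_Normal_Form matrices ('a mat) with explicit dimensions. *)

definition seqs :: "nat \<Rightarrow> nat \<Rightarrow> nat list set" where
  "seqs k t = {s. length s = k \<and> set s \<subseteq> {..<t}}"

definition Tmat :: "nat \<Rightarrow> nat \<Rightarrow> nat list \<Rightarrow> real mat" where
  "Tmat k t s = mat k t (\<lambda>(j, i). if s ! j = i then 1 else 0)"

definition Hmat :: "nat \<Rightarrow> real mat" where
  "Hmat k = mat k k (\<lambda>(i, j). if i mod k = (j + 1) mod k then 1 else 0)"

definition Lmat :: "nat \<Rightarrow> nat \<Rightarrow> nat list \<Rightarrow> real mat" where
  "Lmat k t s = Hmat k * Tmat k t s"

definition Rmat :: "nat \<Rightarrow> nat \<Rightarrow> nat list \<Rightarrow> real mat" where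
  "Rmat k t s = transpose_mat (Hmat k) * Tmat k t s"

definition Gmat :: "nat \<Rightarrow> nat \<Rightarrow> nat list \<Rightarrow> nat \<Rightarrow> real mat" where
  "Gmat k t s i = (if i = 0 then Tmat k t s else if i = 1 then Lmat k t s else Rmat k t s)"

definition pos_def_mat :: "nat \<Rightarrow> real mat \<Rightarrow> bool" where
  "pos_def_mat n A \<longleftrightarrow> A \<in> carrier_mat n n \<and> transpose_mat A = A \<and>
     (\<forall>x \<in> carrier_vec n. x \<noteq> 0\<^sub>v n \<longrightarrow> x \<bullet> (A *\<^sub>v x) > 0)"

definition mat_inv :: "real mat \<Rightarrow> real mat" where
  "mat_inv A = (THE X. X \<in> carrier_mat (dim_row A) (dim_row A) \<and>
                       A * X = 1\<^sub>m (dim_row A) \<and> X * A = 1\<^sub>m (dim_row A))"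

definition mp_inverse :: "real mat \<Rightarrow> real mat" where
  "mp_inverse A = (THE X. X \<in> carrier_mat (dim_col A) (dim_row A) \<and>
       A * X * A = A \<and> X * A * X = X \<and>
       transpose_mat (A * X) = A * X \<and> transpose_mat (X * A) = X * A)"

definition Btilde :: "nat \<Rightarrow> real mat \<Rightarrow> real mat" where
  "Btilde k Sig = (let Si = mat_inv Sig; one = vec k (\<lambda>_. (1::real)) in
     Si - (1 / (one \<bullet> (Si *\<^sub>v one))) \<cdot>\<^sub>m (Si * mat k k (\<lambda>_. 1) * Si))"

definition Cs :: "nat \<Rightarrow> nat \<Rightarrow> real mat \<Rightarrow> nat list \<Rightarrow> nat \<Rightarrow> nat \<Rightarrow> real mat" where
  "Cs k t Sig s i j = transpose_mat (Gmat k t s i) * Btilde k Sig * Gmat k t s j"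

definition is_measure :: "nat \<Rightarrow> nat \<Rightarrow> (nat list \<Rightarrow> real) \<Rightarrow> bool" where
  "is_measure k t p \<longleftrightarrow> (\<forall>s \<in> seqs k t. p s \<ge> 0) \<and> (\<Sum>s \<in> seqs k t. p s) = 1"

definition Cxi :: "nat \<Rightarrow> nat \<Rightarrow> real mat \<Rightarrow> (nat list \<Rightarrow> real) \<Rightarrow> nat \<Rightarrow> nat \<Rightarrow> real mat" where
  "Cxi k t Sig p i j = mat t t (\<lambda>(a, b). \<Sum>s \<in> seqs k t. p s * (Cs k t Sig s i j) $$ (a, b))"

definition mtrace :: "real mat \<Rightarrow> real" where
  "mtrace A = (\<Sum>i < dim_row A. A $$ (i, i))"

definition Vxi :: "nat \<Rightarrow> nat \<Rightarrow> real mat \<Rightarrow> (nat list \<Rightarrow> real) \<Rightarrow> real mat" where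
  "Vxi k t Sig p = mat 3 3 (\<lambda>(i, j). mtrace (Cxi k t Sig p i j))"

definition completely_symmetric :: "nat \<Rightarrow> real mat \<Rightarrow> bool" where
  "completely_symmetric t A \<longleftrightarrow> (\<exists>a b. A = a \<cdot>\<^sub>m 1\<^sub>m t + b \<cdot>\<^sub>m mat t t (\<lambda>_. 1))"

definition pseudo_symmetric :: "nat \<Rightarrow> nat \<Rightarrow> real mat \<Rightarrow> (nat list \<Rightarrow> real) \<Rightarrow> bool" where
  "pseudo_symmetric k t Sig p \<longleftrightarrow>
     is_measure k t p \<and> (\<forall>i \<le> 2. \<forall>j \<le> 2. completely_symmetric t (Cxi k t Sig p i j))"

definition Cuw :: "nat \<Rightarrow> nat \<Rightarrow> real mat \<Rightarrow> (nat list \<Rightarrow> real) \<Rightarrow> real vec \<Rightarrow> real vec \<Rightarrow> real mat" where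
  "Cuw k t Sig p u w = mat t t (\<lambda>(a, b). \<Sum>i < 3. \<Sum>j < 3. u $ i * w $ j * (Cxi k t Sig p i j) $$ (a, b))"

definition Ixi :: "nat \<Rightarrow> nat \<Rightarrow> real mat \<Rightarrow> (nat list \<Rightarrow> real) \<Rightarrow> real vec \<Rightarrow> real vec list \<Rightarrow> real vec \<Rightarrow> real mat" where
  "Ixi k t Sig p u ws x = (let m = length ws;
      F = mat m t (\<lambda>(a, c). (Cuw k t Sig p u (ws ! a) *\<^sub>v x) $ c);
      G = mat m m (\<lambda>(a, b). x \<bullet> (Cuw k t Sig p (ws ! a) (ws ! b) *\<^sub>v x))
    in Cuw k t Sig p u u - transpose_mat F * mp_inverse G * F)"

definition contrasts :: "nat \<Rightarrow> real vec set" where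
  "contrasts t = {x \<in> carrier_vec t. (\<Sum>i < t. x $ i) = 0 \<and> x \<noteq> 0\<^sub>v t}"

definition ell :: "real \<Rightarrow> real vec" where
  "ell lam = vec_of_list [1, lam, lam]"

definition ell3 :: "real vec" where
  "ell3 = vec_of_list [2, -1, -1]"

(* information matrix for the total treatment effect in the undirectional model *)
definition Ctilde :: "nat \<Rightarrow> nat \<Rightarrow> real mat \<Rightarrow> (nat list \<Rightarrow> real) \<Rightarrow> real \<Rightarrow> real vec \<Rightarrow> real mat" where
  "Ctilde k t Sig p lam theta = (1 / (1 + 2 * lam)^2) \<cdot>\<^sub>m Ixi k t Sig p (ell lam) [ell3] theta"

definition scalar_pinv :: "real \<Rightarrow> real" where
  "scalar_pinv a = (if a = 0 then 0 else 1 / a)"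

definition qform :: "real mat \<Rightarrow> real vec \<Rightarrow> real vec \<Rightarrow> real" where
  "qform V u w = u \<bullet> (V *\<^sub>v w)"

end

theory Submission
  imports Defs
begin

lemma det_rank_one:
  fixes u v :: "nat \<Rightarrow> real"
  shows "det (1\<^sub>m n + mat n n (\<lambda>(i,j). u i * v j)) = 1 + (\<Sum>i<n. v i * u i)"
proof -
  define U where "U = mat n 1 (\<lambda>(i,_). u i)"
  define W where "W = mat 1 n (\<lambda>(_,j). v j)"
  have U: "U \<in> carrier_mat n 1" and W: "W \<in> carrier_mat 1 n" unfolding U_def W_def by auto
  have UW: "U * W = mat n n (\<lambda>(i,j). u i * v j)"
    by (rule eq_matI, auto simp: U_def W_def scalar_prod_def)
  have WU: "W * U = mat 1 1 (\<lambda>_. \<Sum>i<n. v i * u i)"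
    by (rule eq_matI, auto simp: U_def W_def scalar_prod_def lessThan_atLeast0)
  define A where "A = four_block_mat (1\<^sub>m n) U (- W) (1\<^sub>m 1)"
  define L1 where "L1 = four_block_mat (1\<^sub>m n) (- U) (0\<^sub>m 1 n) (1\<^sub>m 1)"
  define L2 where "L2 = four_block_mat (1\<^sub>m n) (0\<^sub>m n 1) W (1\<^sub>m 1)"
  have A: "A \<in> carrier_mat (n+1) (n+1)" unfolding A_def using U W by auto
  have L1: "L1 \<in> carrier_mat (n+1) (n+1)" unfolding L1_def using U W by auto
  have L2: "L2 \<in> carrier_mat (n+1) (n+1)" unfolding L2_def using U W by auto
  have "L1 * A = four_block_mat (1\<^sub>m n * 1\<^sub>m n + (- U) * (- W)) (1\<^sub>m n * U + (- U) * 1\<^sub>m 1)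
        (0\<^sub>m 1 n * 1\<^sub>m n + 1\<^sub>m 1 * (- W)) (0\<^sub>m 1 n * U + 1\<^sub>m 1 * 1\<^sub>m 1)"
    unfolding L1_def A_def by (rule mult_four_block_mat, insert U W, auto)
  also have "\<dots> = four_block_mat (1\<^sub>m n + U * W) (0\<^sub>m n 1) (- W) (1\<^sub>m 1)"
  proof -
    have "1\<^sub>m n * 1\<^sub>m n + (- U) * (- W) = 1\<^sub>m n + U * W" using U W by (intro eq_matI, auto simp: scalar_prod_def)
    moreover have "1\<^sub>m n * U + (- U) * 1\<^sub>m 1 = 0\<^sub>m n 1" using U W by (intro eq_matI, auto)
    moreover have "0\<^sub>m 1 n * 1\<^sub>m n + 1\<^sub>m 1 * (- W) = - W" using U W by (intro eq_matI, auto)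
    moreover have "0\<^sub>m 1 n * U + 1\<^sub>m 1 * 1\<^sub>m 1 = (1\<^sub>m 1 :: real mat)" using U W by (intro eq_matI, auto)
    ultimately show ?thesis by simp
  qed
  finally have L1A: "L1 * A = four_block_mat (1\<^sub>m n + U * W) (0\<^sub>m n 1) (- W) (1\<^sub>m 1)" .
  have "L2 * A = four_block_mat (1\<^sub>m n * 1\<^sub>m n + 0\<^sub>m n 1 * (- W)) (1\<^sub>m n * U + 0\<^sub>m n 1 * 1\<^sub>m 1)
        (W * 1\<^sub>m n + 1\<^sub>m 1 * (- W)) (W * U + 1\<^sub>m 1 * 1\<^sub>m 1)"
    unfolding L2_def A_def by (rule mult_four_block_mat, insert U W, auto)
  also have "\<dots> = four_block_mat (1\<^sub>m n) U (0\<^sub>m 1 n) (W * U + 1\<^sub>m 1)"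
  proof -
    have "1\<^sub>m n * 1\<^sub>m n + 0\<^sub>m n 1 * (- W) = (1\<^sub>m n :: real mat)" using U W by (intro eq_matI, auto)
    moreover have "1\<^sub>m n * U + 0\<^sub>m n 1 * 1\<^sub>m 1 = U" using U W by (intro eq_matI, auto)
    moreover have "W * 1\<^sub>m n + 1\<^sub>m 1 * (- W) = 0\<^sub>m 1 n" using U W by (intro eq_matI, auto)
    moreover have "W * U + 1\<^sub>m 1 * 1\<^sub>m 1 = W * U + 1\<^sub>m 1" using U W by (intro eq_matI, auto)
    ultimately show ?thesis by simp
  qed
  finally have L2A: "L2 * A = four_block_mat (1\<^sub>m n) U (0\<^sub>m 1 n) (W * U + 1\<^sub>m 1)" .
  have dL1: "det L1 = 1" unfolding L1_def
    by (subst det_four_block_mat_lower_left_zero[of _ n _ 1], insert U, auto)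
  have dL2: "det L2 = 1" unfolding L2_def
    by (subst det_four_block_mat_upper_right_zero[of _ n _ 1], insert W, auto)
  have "det (L1 * A) = det (1\<^sub>m n + U * W)" unfolding L1A
    by (subst det_four_block_mat_upper_right_zero[of _ n _ 1], insert U W, auto)
  hence e1: "det A = det (1\<^sub>m n + U * W)" using det_mult[OF L1 A] dL1 by simp
  have "det (L2 * A) = det (W * U + 1\<^sub>m 1)" unfolding L2A
    by (subst det_four_block_mat_lower_left_zero[of _ n _ 1], insert U W, auto)
  also have "\<dots> = 1 + (\<Sum>i<n. v i * u i)"
    by (subst det_single, insert W U, auto simp: WU)
  finally have e2: "det A = 1 + (\<Sum>i<n. v i * u i)" using det_mult[OF L2 A] dL2 by simp
  show ?thesis using e1 e2 UW by simp
qed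

lemma poly_eq_off_point:
  fixes p q :: "real poly"
  assumes "\<And>x. x \<noteq> c \<Longrightarrow> poly p x = poly q x"
  shows "p = q"
proof (rule ccontr)
  assume "p \<noteq> q"
  hence "p - q \<noteq> 0" by simp
  hence fin: "finite {x. poly (p - q) x = 0}" by (rule poly_roots_finite)
  have "UNIV - {c} \<subseteq> {x. poly (p - q) x = 0}" using assms by auto
  hence "finite (UNIV - {c} :: real set)" using fin finite_subset by blast
  thus False using infinite_UNIV_char_0 by auto
qed

lemma char_poly_special:
  fixes th :: "real vec" and n :: nat and g e :: real
  assumes n: "n \<ge> 2" and th: "th \<in> carrier_vec n" and s0: "(\<Sum>i<n. th $ i) = 0"
  shows "char_poly (mat n n (\<lambda>(a,b). g * ((if a = b then 1 else 0) - 1 / real n) - e * th $ a * th $ b))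
     = [:0, 1:] * [:- (g - e * (th \<bullet> th)), 1:] * [:- g, 1:] ^ (n - 2)"
proof -
  define C where "C = mat n n (\<lambda>(a,b). g * ((if a = b then 1 else 0) - 1 / real n) - e * th $ a * th $ b)"
  have C: "C \<in> carrier_mat n n" unfolding C_def by auto
  have tt: "th \<bullet> th = (\<Sum>i<n. th $ i * th $ i)" using th by (simp add: scalar_prod_def lessThan_atLeast0)
  have npos: "real n > 0" using n by simp
  {
    fix x :: real assume x: "x \<noteq> g"
    define y where "y = x - g"
    have y: "y \<noteq> 0" using x y_def by simp
    define c1 where "c1 = g / (real n * y)"
    define c2 where "c2 = e / y"
    define M1 where "M1 = 1\<^sub>m n + mat n n (\<lambda>(i,j). c1 * 1)"
    define M2 where "M2 = 1\<^sub>m n + mat n n (\<lambda>(i,j). (c2 * th $ i) * th $ j)"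
    have M1: "M1 \<in> carrier_mat n n" and M2: "M2 \<in> carrier_mat n n" unfolding M1_def M2_def by auto
    have eq: "- (char_matrix C x) = y \<cdot>\<^sub>m (M1 * M2)"
    proof (rule eq_matI)
      fix a b assume a: "a < dim_row (y \<cdot>\<^sub>m (M1 * M2))" and b: "b < dim_col (y \<cdot>\<^sub>m (M1 * M2))"
      hence a: "a < n" and b: "b < n" using M1 M2 by auto
      have "(M1 * M2) $$ (a, b) = (\<Sum>l<n. ((if l = a then 1 else 0) + c1) * ((if l = b then 1 else 0) + c2 * th $ l * th $ b))"
        using a b M1 M2 by (simp add: M1_def M2_def scalar_prod_def lessThan_atLeast0 mult.assoc)
      also have "\<dots> = (\<Sum>l<n. (if l = a then 1 else 0) * (if l = b then 1 else 0)) + (\<Sum>l<n. (if l = a then 1 else 0) * (c2 * th $ l * th $ b))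
          + (\<Sum>l<n. c1 * (if l = b then 1 else 0)) + c1 * c2 * th $ b * (\<Sum>l<n. th $ l)"
        by (simp add: algebra_simps sum.distrib sum_distrib_left sum_distrib_right)
      also have "\<dots> = (if a = b then 1 else 0) + c2 * th $ a * th $ b + c1"
      proof -
        have m: "\<And>P (z::real). (if P then 1 else 0) * z = (if P then z else 0)"
             "\<And>P (z::real). z * (if P then 1 else 0) = (if P then z else 0)" by auto
        show ?thesis using a b s0 by (simp add: m sum.delta sum.delta')
      qed
      finally have "(M1 * M2) $$ (a, b) = (if a = b then 1 else 0) + c2 * th $ a * th $ b + c1" .
      hence "(y \<cdot>\<^sub>m (M1 * M2)) $$ (a, b) = y * ((if a = b then 1 else 0) + c2 * th $ a * th $ b + c1)"
        using a b M1 M2 by simp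
      also have "\<dots> = y * (if a = b then 1 else 0) + e * th $ a * th $ b + g / real n"
        using y npos by (simp add: c1_def c2_def field_simps)
      also have "\<dots> = (- char_matrix C x) $$ (a, b)"
        using a b C by (simp add: char_matrix_def C_def y_def algebra_simps)
      finally show "(- char_matrix C x) $$ (a, b) = (y \<cdot>\<^sub>m (M1 * M2)) $$ (a, b)" by simp
    qed (insert C M1 M2, auto simp: char_matrix_def)
    have d1: "det M1 = 1 + g / y" unfolding M1_def
      using det_rank_one[of n "\<lambda>_. c1" "\<lambda>_. 1"] npos y by (simp add: c1_def)
    have d2: "det M2 = 1 + e * (th \<bullet> th) / y" unfolding M2_def
      using det_rank_one[of n "\<lambda>i. c2 * th $ i" "\<lambda>j. th $ j"] y
      by (simp add: c2_def tt sum_distrib_left sum_divide_distrib algebra_simps)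
    have "poly (char_poly C) x = det (- (char_matrix C x))" by (rule char_poly_matrix[OF C])
    also have "\<dots> = y ^ n * ((1 + g / y) * (1 + e * (th \<bullet> th) / y))"
      unfolding eq using M1 M2 by (simp add: det_mult[OF M1 M2] d1 d2)
    also have "\<dots> = y ^ (n - 2) * ((y + g) * (y + e * (th \<bullet> th)))"
    proof -
      have en: "n = n - 2 + 2" using n by simp
      have "y ^ n = y ^ (n - 2) * y\<^sup>2" by (subst en, simp only: power_add)
      thus ?thesis using y by (simp add: field_simps power2_eq_square)
    qed
    also have "\<dots> = poly ([:0, 1:] * [:- (g - e * (th \<bullet> th)), 1:] * [:- g, 1:] ^ (n - 2)) x"
      by (simp add: y_def algebra_simps)
    finally have "poly (char_poly C) x = poly ([:0, 1:] * [:- (g - e * (th \<bullet> th)), 1:] * [:- g, 1:] ^ (n - 2)) x" .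
  }
  hence "char_poly C = [:0, 1:] * [:- (g - e * (th \<bullet> th)), 1:] * [:- g, 1:] ^ (n - 2)"
    by (intro poly_eq_off_point[of g]) auto
  thus ?thesis unfolding C_def .
qed

lemma mat_inv_props:
  assumes pd: "pos_def_mat k Sig"
  shows "mat_inv Sig \<in> carrier_mat k k" "Sig * mat_inv Sig = 1\<^sub>m k" "mat_inv Sig * Sig = 1\<^sub>m k"
    "transpose_mat (mat_inv Sig) = mat_inv Sig"
proof -
  have S: "Sig \<in> carrier_mat k k" and St: "transpose_mat Sig = Sig"
    and P: "\<And>x. x \<in> carrier_vec k \<Longrightarrow> x \<noteq> 0\<^sub>v k \<Longrightarrow> x \<bullet> (Sig *\<^sub>v x) > 0"
    using pd unfolding pos_def_mat_def by auto
  have "det Sig \<noteq> 0"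
  proof
    assume "det Sig = 0"
    then obtain v where v: "v \<in> carrier_vec k" "v \<noteq> 0\<^sub>v k" "Sig *\<^sub>v v = 0\<^sub>v k"
      using det_0_iff_vec_prod_zero_field[OF S] by auto
    have "v \<bullet> (Sig *\<^sub>v v) = 0" using v by simp
    with P[OF v(1) v(2)] show False by simp
  qed
  from det_non_zero_imp_unit[OF S this, of "()"]
  obtain B where B: "B \<in> carrier_mat k k" "B * Sig = 1\<^sub>m k" "Sig * B = 1\<^sub>m k"
    unfolding Units_def ring_mat_simps by auto
  have dr: "dim_row Sig = k" using S by simp
  have "mat_inv Sig = B" unfolding mat_inv_def dr
  proof (rule the_equality)
    show "B \<in> carrier_mat k k \<and> Sig * B = 1\<^sub>m k \<and> B * Sig = 1\<^sub>m k" using B by auto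
  next
    fix X assume X: "X \<in> carrier_mat k k \<and> Sig * X = 1\<^sub>m k \<and> X * Sig = 1\<^sub>m k"
    have "X = X * (Sig * B)" using X[THEN conjunct1] B by simp
    also have "\<dots> = (X * Sig) * B" using X[THEN conjunct1] B S by (metis assoc_mult_mat)
    also have "\<dots> = B" using X B by (metis left_mult_one_mat)
    finally show "X = B" .
  qed
  thus Si: "mat_inv Sig \<in> carrier_mat k k" "Sig * mat_inv Sig = 1\<^sub>m k" "mat_inv Sig * Sig = 1\<^sub>m k"
    using B by auto
  have "transpose_mat B * Sig = 1\<^sub>m k"
    using transpose_mult[OF S B(1)] B St by simp
  hence "transpose_mat B = transpose_mat B * (Sig * B)" using B by simp
  also have "\<dots> = (transpose_mat B * Sig) * B" using B S by (simp add: assoc_mult_mat)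
  also have "\<dots> = B" using \<open>transpose_mat B * Sig = 1\<^sub>m k\<close> B by simp
  finally show "transpose_mat (mat_inv Sig) = mat_inv Sig" using \<open>mat_inv Sig = B\<close> by simp
qed

lemma mat_inv_psd:
  assumes pd: "pos_def_mat k Sig" and h: "hv \<in> carrier_vec k"
  shows "hv \<bullet> (mat_inv Sig *\<^sub>v hv) \<ge> 0" "hv \<noteq> 0\<^sub>v k \<Longrightarrow> hv \<bullet> (mat_inv Sig *\<^sub>v hv) > 0"
proof -
  have S: "Sig \<in> carrier_mat k k" and St: "transpose_mat Sig = Sig"
    and P: "\<And>x. x \<in> carrier_vec k \<Longrightarrow> x \<noteq> 0\<^sub>v k \<Longrightarrow> x \<bullet> (Sig *\<^sub>v x) > 0"
    using pd unfolding pos_def_mat_def by auto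
  note Si = mat_inv_props[OF pd]
  define y where "y = mat_inv Sig *\<^sub>v hv"
  have y: "y \<in> carrier_vec k" unfolding y_def using Si h by simp
  have hy: "hv = Sig *\<^sub>v y" unfolding y_def using Si S h
    by (simp add: assoc_mult_mat_vec[symmetric])
  have "hv \<bullet> (mat_inv Sig *\<^sub>v hv) = (transpose_mat Sig *\<^sub>v y) \<bullet> y"
    unfolding y_def[symmetric] using hy St by simp
  also have "\<dots> = y \<bullet> (Sig *\<^sub>v y)" by (rule transpose_vec_mult_scalar[OF S y y])
  finally have e: "hv \<bullet> (mat_inv Sig *\<^sub>v hv) = y \<bullet> (Sig *\<^sub>v y)" .
  show "hv \<bullet> (mat_inv Sig *\<^sub>v hv) \<ge> 0"
  proof (cases "y = 0\<^sub>v k")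
    case True thus ?thesis using e S by simp
  next
    case False thus ?thesis using e P[OF y] by simp
  qed
  assume "hv \<noteq> 0\<^sub>v k"
  hence "y \<noteq> 0\<^sub>v k" using hy S by auto
  thus "hv \<bullet> (mat_inv Sig *\<^sub>v hv) > 0" using e P[OF y] by simp
qed

lemma mat_inv_psd_sum:
  assumes pd: "pos_def_mat k Sig"
  shows "(\<Sum>i<k. \<Sum>j<k. h i * mat_inv Sig $$ (i, j) * h j) \<ge> 0"
proof -
  note Si = mat_inv_props[OF pd]
  have "(\<Sum>i<k. \<Sum>j<k. h i * mat_inv Sig $$ (i, j) * h j) = vec k h \<bullet> (mat_inv Sig *\<^sub>v vec k h)"
    using Si by (simp add: scalar_prod_def lessThan_atLeast0 sum_distrib_left mult.assoc)
  thus ?thesis using mat_inv_psd(1)[OF pd, of "vec k h"] by simp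
qed

lemma mat_inv_c_pos:
  assumes pd: "pos_def_mat k Sig" and k: "k \<ge> 1"
  shows "(\<Sum>i<k. \<Sum>j<k. mat_inv Sig $$ (i, j)) > 0"
proof -
  note Si = mat_inv_props[OF pd]
  have "(\<Sum>i<k. \<Sum>j<k. mat_inv Sig $$ (i, j)) = vec k (\<lambda>_. 1) \<bullet> (mat_inv Sig *\<^sub>v vec k (\<lambda>_. 1))"
    using Si by (simp add: scalar_prod_def lessThan_atLeast0)
  moreover have "vec k (\<lambda>_. (1::real)) \<noteq> 0\<^sub>v k"
  proof
    assume "vec k (\<lambda>_. (1::real)) = 0\<^sub>v k"
    hence "vec k (\<lambda>_. (1::real)) $ 0 = 0\<^sub>v k $ 0" by simp
    thus False using k by simp
  qed
  ultimately show ?thesis using mat_inv_psd(2)[OF pd, of "vec k (\<lambda>_. 1)"] by simp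
qed

lemma psd_proj:
  fixes S :: "nat \<Rightarrow> nat \<Rightarrow> real" and K :: nat and g :: "nat \<Rightarrow> real"
  assumes sym: "\<And>i j. i < K \<Longrightarrow> j < K \<Longrightarrow> S i j = S j i"
    and psd: "\<And>h. (\<Sum>i<K. \<Sum>j<K. h i * S i j * h j) \<ge> 0"
    and cpos: "(\<Sum>i<K. \<Sum>j<K. S i j) > 0"
  shows "(\<Sum>i<K. \<Sum>j<K. g i * (S i j - (1 / (\<Sum>i<K. \<Sum>j<K. S i j)) * (\<Sum>l<K. S i l) * (\<Sum>l<K. S j l)) * g j) \<ge> 0"
proof -
  define c where "c = (\<Sum>i<K. \<Sum>j<K. S i j)"
  define r where "r i = (\<Sum>l<K. S i l)" for i
  define m where "m = (\<Sum>i<K. g i * r i)"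
  define q where "q = (\<Sum>i<K. \<Sum>j<K. g i * S i j * g j)"
  define la where "la = m / c"
  have c: "c > 0" using cpos c_def by simp
  have m1: "(\<Sum>i<K. \<Sum>j<K. g i * S i j) = m"
    by (simp add: m_def r_def sum_distrib_left)
  have m2: "(\<Sum>i<K. \<Sum>j<K. S i j * g j) = m"
  proof -
    have "(\<Sum>i<K. \<Sum>j<K. S i j * g j) = (\<Sum>j<K. \<Sum>i<K. S i j * g j)" by (rule sum.swap)
    also have "\<dots> = (\<Sum>j<K. \<Sum>i<K. g j * S j i)"
      by (intro sum.cong refl, simp add: sym mult.commute)
    also have "\<dots> = m" by (rule m1)
    finally show ?thesis .
  qed
  have "(\<Sum>i<K. \<Sum>j<K. (g i - la) * S i j * (g j - la))
      = (\<Sum>i<K. \<Sum>j<K. g i * S i j * g j - la * (g i * S i j) - la * (S i j * g j) + la * la * S i j)"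
    by (intro sum.cong refl, simp add: algebra_simps)
  also have "\<dots> = q - la * m - la * m + la * la * c"
    by (simp add: q_def c_def sum.distrib sum_subtractf sum_distrib_left[symmetric] m1 m2 m_def r_def)
  also have "\<dots> = q - m * m / c" using c by (simp add: la_def field_simps)
  finally have e1: "(\<Sum>i<K. \<Sum>j<K. (g i - la) * S i j * (g j - la)) = q - m * m / c" .
  have "(\<Sum>i<K. \<Sum>j<K. g i * (S i j - (1 / c) * r i * r j) * g j)
      = (\<Sum>i<K. \<Sum>j<K. g i * S i j * g j - (1 / c) * ((g i * r i) * (g j * r j)))"
    by (intro sum.cong refl, simp add: algebra_simps)
  also have "\<dots> = q - (1 / c) * (\<Sum>i<K. \<Sum>j<K. (g i * r i) * (g j * r j))"
    by (simp add: q_def sum_subtractf sum_distrib_left)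
  also have "(\<Sum>i<K. \<Sum>j<K. (g i * r i) * (g j * r j)) = m * m"
    by (simp add: m_def sum_product)
  finally have e2: "(\<Sum>i<K. \<Sum>j<K. g i * (S i j - (1 / c) * r i * r j) * g j) = q - m * m / c" by simp
  show ?thesis using e1 e2 psd[of "\<lambda>i. g i - la"] unfolding c_def r_def by simp
qed

context
  fixes k :: nat and Sig :: "real mat"
  assumes pd: "pos_def_mat k Sig" and k1: "k \<ge> 1"
begin

definition "Si = mat_inv Sig"
definition "rr i = (\<Sum>l<k. Si $$ (i, l))"
definition "cc = (\<Sum>i<k. \<Sum>j<k. Si $$ (i, j))"

lemma Si: "Si \<in> carrier_mat k k" "\<And>i j. i < k \<Longrightarrow> j < k \<Longrightarrow> Si $$ (i, j) = Si $$ (j, i)"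
proof -
  note P = mat_inv_props[OF pd, folded Si_def]
  show "Si \<in> carrier_mat k k" using P by simp
  fix i j assume "i < k" "j < k"
  hence "transpose_mat Si $$ (i, j) = Si $$ (j, i)" using P(1) by simp
  thus "Si $$ (i, j) = Si $$ (j, i)" using P by simp
qed

lemma cc_pos: "cc > 0" unfolding cc_def Si_def by (rule mat_inv_c_pos[OF pd k1])

lemma Btilde_carrier: "Btilde k Sig \<in> carrier_mat k k"
  using Si unfolding Btilde_def Let_def Si_def[symmetric] by auto

lemma Btilde_entry: assumes "i < k" "j < k"
  shows "Btilde k Sig $$ (i, j) = Si $$ (i, j) - (1 / cc) * rr i * rr j"
proof -
  have c: "vec k (\<lambda>_. 1) \<bullet> (Si *\<^sub>v vec k (\<lambda>_. 1)) = cc"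
    using Si by (simp add: scalar_prod_def lessThan_atLeast0 cc_def)
  have "(Si * mat k k (\<lambda>_. 1) * Si) $$ (i, j) = (\<Sum>b<k. rr i * Si $$ (b, j))"
    using Si assms by (simp add: scalar_prod_def lessThan_atLeast0 rr_def)
  also have "\<dots> = rr i * rr j" using Si(2) assms
    by (simp add: rr_def sum_distrib_left[symmetric])
  finally have "(Si * mat k k (\<lambda>_. 1) * Si) $$ (i, j) = rr i * rr j" .
  thus ?thesis using Si assms unfolding Btilde_def Let_def Si_def[symmetric] c by simp
qed

lemma Btilde_rowsum: assumes "i < k" shows "(\<Sum>j<k. Btilde k Sig $$ (i, j)) = 0"
proof -
  have "(\<Sum>j<k. Btilde k Sig $$ (i, j)) = rr i - (1 / cc) * rr i * (\<Sum>j<k. rr j)"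
    using assms by (simp add: Btilde_entry sum_subtractf sum_distrib_left rr_def)
  also have "(\<Sum>j<k. rr j) = cc" by (simp add: rr_def cc_def)
  finally show ?thesis using cc_pos by simp
qed

lemma Btilde_psd: "(\<Sum>i<k. \<Sum>j<k. g i * Btilde k Sig $$ (i, j) * g j) \<ge> 0"
proof -
  have "(\<Sum>i<k. \<Sum>j<k. g i * Btilde k Sig $$ (i, j) * g j) =
     (\<Sum>i<k. \<Sum>j<k. g i * (Si $$ (i, j) - (1 / (\<Sum>i<k. \<Sum>j<k. Si $$ (i, j))) * (\<Sum>l<k. Si $$ (i, l)) * (\<Sum>l<k. Si $$ (j, l))) * g j)"
    by (intro sum.cong refl, simp add: Btilde_entry rr_def cc_def)
  also have "\<dots> \<ge> 0"
    by (rule psd_proj, insert Si(2) mat_inv_psd_sum[OF pd] cc_pos, auto simp: Si_def cc_def)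
  finally show ?thesis .
qed

end

lemma sum4_swap:
  "(\<Sum>i\<in>A. \<Sum>j\<in>B. \<Sum>x\<in>C. \<Sum>y\<in>D. F i j x y) = (\<Sum>x\<in>C. \<Sum>y\<in>D. \<Sum>i\<in>A. \<Sum>j\<in>B. (F i j x y :: real))"
proof -
  have "(\<Sum>i\<in>A. \<Sum>j\<in>B. \<Sum>x\<in>C. \<Sum>y\<in>D. F i j x y) = (\<Sum>i\<in>A. \<Sum>x\<in>C. \<Sum>j\<in>B. \<Sum>y\<in>D. F i j x y)"
    by (intro sum.cong refl, rule sum.swap)
  also have "\<dots> = (\<Sum>x\<in>C. \<Sum>i\<in>A. \<Sum>j\<in>B. \<Sum>y\<in>D. F i j x y)" by (rule sum.swap)
  also have "\<dots> = (\<Sum>x\<in>C. \<Sum>i\<in>A. \<Sum>y\<in>D. \<Sum>j\<in>B. F i j x y)"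
    by (intro sum.cong refl, rule sum.swap)
  also have "\<dots> = (\<Sum>x\<in>C. \<Sum>y\<in>D. \<Sum>i\<in>A. \<Sum>j\<in>B. F i j x y)"
    by (intro sum.cong refl, rule sum.swap)
  finally show ?thesis .
qed

lemma prod_sums: "(\<Sum>i\<in>A. x i) * (c::real) * (\<Sum>j\<in>B. y j) = (\<Sum>i\<in>A. \<Sum>j\<in>B. x i * c * y j)"
proof -
  have "(\<Sum>i\<in>A. x i) * c * (\<Sum>j\<in>B. y j) = (\<Sum>i\<in>A. x i * c) * (\<Sum>j\<in>B. y j)" by (simp add: sum_distrib_right)
  also have "\<dots> = (\<Sum>i\<in>A. \<Sum>j\<in>B. x i * c * y j)" by (rule sum_product)
  finally show ?thesis .
qed

lemma H_entry: "q < k \<Longrightarrow> l < k \<Longrightarrow> Hmat k $$ (q, l) = (if q mod k = (l + 1) mod k then 1 else 0)"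
  by (simp add: Hmat_def)

lemma Hrow: assumes q: "q < k" shows "(\<Sum>l<k. Hmat k $$ (q, l)) = 1"
proof -
  define pp where "pp = (if q = 0 then k - 1 else q - 1)"
  have pp: "pp < k" using q by (auto simp: pp_def)
  have iff: "(q mod k = (l + 1) mod k) = (l = pp)" if l: "l < k" for l
  proof -
    have m: "(l + 1) mod k = (if l + 1 = k then 0 else l + 1)" using l by auto
    have qm: "q mod k = q" using q by simp
    show ?thesis unfolding m qm using q l by (auto simp: pp_def)
  qed
  have "(\<Sum>l<k. Hmat k $$ (q, l)) = (\<Sum>l<k. if l = pp then 1 else 0)"
    by (rule sum.cong[OF refl], unfold lessThan_iff, unfold H_entry[OF q] iff, rule refl)
  also have "\<dots> = 1" using pp by simp
  finally show ?thesis .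
qed

lemma Hcol: assumes l: "l < k" shows "(\<Sum>q<k. Hmat k $$ (q, l)) = 1"
proof -
  have k: "k > 0" using l by simp
  have "(\<Sum>q<k. Hmat k $$ (q, l)) = (\<Sum>q<k. if q = (l + 1) mod k then 1 else 0)"
    by (intro sum.cong refl, simp add: H_entry l)
  also have "\<dots> = 1" using k by simp
  finally show ?thesis .
qed

lemma H_carrier: "Hmat k \<in> carrier_mat k k" by (simp add: Hmat_def)
lemma T_carrier: "Tmat k t s \<in> carrier_mat k t" by (simp add: Tmat_def)

lemma Trow: assumes s: "s \<in> seqs k t" and q: "q < k" shows "(\<Sum>b<t. Tmat k t s $$ (q, b)) = 1"
proof -
  have ss: "set s \<subseteq> {..<t}" "length s = k" using s by (auto simp: seqs_def)
  have "s ! q \<in> set s" using ss q by simp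
  hence "s ! q < t" using ss by auto
  hence "(\<Sum>b<t. Tmat k t s $$ (q, b)) = (\<Sum>b<t. if s ! q = b then 1 else 0)"
    by (intro sum.cong refl, simp add: Tmat_def q)
  also have "\<dots> = 1" using \<open>s ! q < t\<close> by simp
  finally show ?thesis .
qed

lemma G_carrier: "Gmat k t s i \<in> carrier_mat k t"
proof -
  have H: "Hmat k \<in> carrier_mat k k" "transpose_mat (Hmat k) \<in> carrier_mat k k" using H_carrier by auto
  show ?thesis using mult_carrier_mat[OF H(1) T_carrier] mult_carrier_mat[OF H(2) T_carrier] T_carrier
    by (simp add: Gmat_def Lmat_def Rmat_def)
qed

lemma Grow: assumes s: "s \<in> seqs k t" and q: "q < k" shows "(\<Sum>b<t. Gmat k t s i $$ (q, b)) = 1"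
proof -
  have L: "(\<Sum>b<t. (M * Tmat k t s) $$ (q, b)) = (\<Sum>l<k. M $$ (q, l))" if M: "M \<in> carrier_mat k k" for M
  proof -
    have "(\<Sum>b<t. (M * Tmat k t s) $$ (q, b)) = (\<Sum>b<t. \<Sum>l<k. M $$ (q, l) * Tmat k t s $$ (l, b))"
      using M q T_carrier[of k t s] by (intro sum.cong refl, simp add: scalar_prod_def lessThan_atLeast0)
    also have "\<dots> = (\<Sum>l<k. M $$ (q, l) * (\<Sum>b<t. Tmat k t s $$ (l, b)))"
      by (subst sum.swap, simp add: sum_distrib_left)
    also have "\<dots> = (\<Sum>l<k. M $$ (q, l))" by (intro sum.cong refl, simp add: Trow[OF s])
    finally show ?thesis .
  qed
  show ?thesis
  proof (cases "i = 0")
    case True thus ?thesis by (simp add: Gmat_def Trow[OF s q])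
  next
    case False note i0 = this
    show ?thesis
    proof (cases "i = 1")
      case True thus ?thesis using L[OF H_carrier] Hrow[OF q] by (simp add: Gmat_def Lmat_def)
    next
      case False
      have "(\<Sum>l<k. transpose_mat (Hmat k) $$ (q, l)) = (\<Sum>l<k. Hmat k $$ (l, q))"
        by (intro sum.cong refl, simp add: Hmat_def q)
      thus ?thesis using False i0 L[of "transpose_mat (Hmat k)"] H_carrier Hcol[OF q]
        by (simp add: Gmat_def Rmat_def)
    qed
  qed
qed

context
  fixes k t :: nat and Sig :: "real mat"
  assumes pd: "pos_def_mat k Sig" and k1: "k \<ge> 1"
begin

lemma Cs_carrier: "Cs k t Sig s i j \<in> carrier_mat t t"
  unfolding Cs_def
  by (rule mult_carrier_mat[OF mult_carrier_mat[OF transpose_carrier_mat[THEN iffD2, OF G_carrier] Btilde_carrier[OF pd k1]] G_carrier])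

lemma Cs_entry: assumes a: "a < t" and b: "b < t"
  shows "Cs k t Sig s i j $$ (a, b) = (\<Sum>r<k. \<Sum>q<k. Gmat k t s i $$ (r, a) * Btilde k Sig $$ (r, q) * Gmat k t s j $$ (q, b))"
proof -
  note Gi = G_carrier[of k t s i] and Gj = G_carrier[of k t s j] and B = Btilde_carrier[OF pd k1]
  have "Cs k t Sig s i j $$ (a, b) = (\<Sum>r<k. Gmat k t s i $$ (r, a) * (\<Sum>q<k. Btilde k Sig $$ (r, q) * Gmat k t s j $$ (q, b)))"
    unfolding Cs_def using Gi Gj B a b by (simp add: scalar_prod_def lessThan_atLeast0)
  also have "\<dots> = (\<Sum>r<k. \<Sum>q<k. Gmat k t s i $$ (r, a) * Btilde k Sig $$ (r, q) * Gmat k t s j $$ (q, b))"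
    by (simp add: sum_distrib_left mult.assoc)
  finally show ?thesis .
qed

lemma Cs_rowsum: assumes s: "s \<in> seqs k t" and a: "a < t"
  shows "(\<Sum>b<t. Cs k t Sig s i j $$ (a, b)) = 0"
proof -
  have "(\<Sum>b<t. Cs k t Sig s i j $$ (a, b)) =
      (\<Sum>b<t. \<Sum>r<k. \<Sum>q<k. Gmat k t s i $$ (r, a) * Btilde k Sig $$ (r, q) * Gmat k t s j $$ (q, b))"
    by (intro sum.cong refl, simp add: Cs_entry a)
  also have "\<dots> = (\<Sum>r<k. \<Sum>q<k. Gmat k t s i $$ (r, a) * Btilde k Sig $$ (r, q) * (\<Sum>b<t. Gmat k t s j $$ (q, b)))"
  proof -
    have "(\<Sum>b<t. \<Sum>r<k. \<Sum>q<k. Gmat k t s i $$ (r, a) * Btilde k Sig $$ (r, q) * Gmat k t s j $$ (q, b))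
      = (\<Sum>r<k. \<Sum>b<t. \<Sum>q<k. Gmat k t s i $$ (r, a) * Btilde k Sig $$ (r, q) * Gmat k t s j $$ (q, b))"
      by (rule sum.swap)
    also have "\<dots> = (\<Sum>r<k. \<Sum>q<k. \<Sum>b<t. Gmat k t s i $$ (r, a) * Btilde k Sig $$ (r, q) * Gmat k t s j $$ (q, b))"
      by (rule sum.cong[OF refl], rule sum.swap)
    finally show ?thesis by (simp add: sum_distrib_left)
  qed
  also have "\<dots> = (\<Sum>r<k. Gmat k t s i $$ (r, a) * (\<Sum>q<k. Btilde k Sig $$ (r, q)))"
    by (intro sum.cong refl, simp add: Grow[OF s] sum_distrib_left)
  also have "\<dots> = 0" by (simp add: Btilde_rowsum[OF pd k1])
  finally show ?thesis .
qed

lemma Cxi_entry: "a < t \<Longrightarrow> b < t \<Longrightarrow> Cxi k t Sig p i j $$ (a, b) = (\<Sum>s\<in>seqs k t. p s * Cs k t Sig s i j $$ (a, b))"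
  by (simp add: Cxi_def)

lemma Cxi_rowsum: assumes a: "a < t"
  shows "(\<Sum>b<t. Cxi k t Sig p i j $$ (a, b)) = 0"
proof -
  have "(\<Sum>b<t. Cxi k t Sig p i j $$ (a, b)) = (\<Sum>b<t. \<Sum>s\<in>seqs k t. p s * Cs k t Sig s i j $$ (a, b))"
    by (intro sum.cong refl, simp add: Cxi_entry a)
  also have "\<dots> = (\<Sum>s\<in>seqs k t. p s * (\<Sum>b<t. Cs k t Sig s i j $$ (a, b)))"
    by (subst sum.swap, simp add: sum_distrib_left)
  also have "\<dots> = 0" by (simp add: Cs_rowsum a)
  finally show ?thesis .
qed

lemma V_entry: "i < 3 \<Longrightarrow> j < 3 \<Longrightarrow> Vxi k t Sig p $$ (i, j) = (\<Sum>a<t. \<Sum>s\<in>seqs k t. p s * Cs k t Sig s i j $$ (a, a))"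
  by (simp add: Vxi_def mtrace_def Cxi_def)

lemma qform_V: assumes u: "u \<in> carrier_vec 3" and w: "w \<in> carrier_vec 3"
  shows "qform (Vxi k t Sig p) u w = (\<Sum>i<3. \<Sum>j<3. u $ i * w $ j * Vxi k t Sig p $$ (i, j))"
  using u w by (simp add: qform_def Vxi_def scalar_prod_def lessThan_atLeast0 sum_distrib_left algebra_simps)

lemma V_psd: assumes u: "u \<in> carrier_vec 3" and m: "is_measure k t p"
  shows "qform (Vxi k t Sig p) u u \<ge> 0"
proof -
  let ?G = "\<lambda>s i r a. Gmat k t s i $$ (r, a)"
  let ?B = "\<lambda>r q. Btilde k Sig $$ (r, q)"
  have "qform (Vxi k t Sig p) u u = (\<Sum>i<3. \<Sum>j<3. \<Sum>a<t. \<Sum>s\<in>seqs k t. u $ i * u $ j * (p s * Cs k t Sig s i j $$ (a, a)))"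
    unfolding qform_V[OF u u] by (intro sum.cong refl, simp add: V_entry sum_distrib_left)
  also have "\<dots> = (\<Sum>a<t. \<Sum>s\<in>seqs k t. \<Sum>i<3. \<Sum>j<3. u $ i * u $ j * (p s * Cs k t Sig s i j $$ (a, a)))"
    by (rule sum4_swap)
  also have "\<dots> = (\<Sum>a<t. \<Sum>s\<in>seqs k t. p s * (\<Sum>r<k. \<Sum>q<k. (\<Sum>i<3. u $ i * ?G s i r a) * ?B r q * (\<Sum>j<3. u $ j * ?G s j q a)))"
  proof (rule sum.cong[OF refl], rule sum.cong[OF refl])
    fix a s assume a: "a \<in> {..<t}" and "s \<in> seqs k t"
    have "(\<Sum>i<3. \<Sum>j<3. u $ i * u $ j * (p s * Cs k t Sig s i j $$ (a, a)))
       = p s * (\<Sum>i<3. \<Sum>j<3. \<Sum>r<k. \<Sum>q<k. (u $ i * ?G s i r a) * ?B r q * (u $ j * ?G s j q a))"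
      using a by (simp add: Cs_entry sum_distrib_left algebra_simps)
    also have "(\<Sum>i<3. \<Sum>j<3. \<Sum>r<k. \<Sum>q<k. (u $ i * ?G s i r a) * ?B r q * (u $ j * ?G s j q a))
        = (\<Sum>r<k. \<Sum>q<k. \<Sum>i<3. \<Sum>j<3. (u $ i * ?G s i r a) * ?B r q * (u $ j * ?G s j q a))"
      by (rule sum4_swap)
    also have "\<dots> = (\<Sum>r<k. \<Sum>q<k. (\<Sum>i<3. u $ i * ?G s i r a) * ?B r q * (\<Sum>j<3. u $ j * ?G s j q a))"
      by (simp add: prod_sums)
    finally show "(\<Sum>i<3. \<Sum>j<3. u $ i * u $ j * (p s * Cs k t Sig s i j $$ (a, a)))
       = p s * (\<Sum>r<k. \<Sum>q<k. (\<Sum>i<3. u $ i * ?G s i r a) * ?B r q * (\<Sum>j<3. u $ j * ?G s j q a))" .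
  qed
  also have "\<dots> \<ge> 0"
  proof (rule sum_nonneg, rule sum_nonneg, rule mult_nonneg_nonneg)
    fix a s assume "a \<in> {..<t}" "s \<in> seqs k t"
    thus "p s \<ge> 0" using m unfolding is_measure_def by auto
  next
    fix a s
    show "(\<Sum>r<k. \<Sum>q<k. (\<Sum>i<3. u $ i * ?G s i r a) * ?B r q * (\<Sum>j<3. u $ j * ?G s j q a)) \<ge> 0"
      by (rule Btilde_psd[OF pd k1])
  qed
  finally show ?thesis .
qed

end

lemma mp_inverse_1x1: "mp_inverse (mat 1 1 (\<lambda>_. z)) = mat 1 1 (\<lambda>_. scalar_pinv z)"
proof -
  let ?A = "mat 1 1 (\<lambda>_. z) :: real mat"
  let ?X = "mat 1 1 (\<lambda>_. scalar_pinv z) :: real mat"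
  have one: "\<And>i. i < (1::nat) \<longleftrightarrow> i = 0" by auto
  show ?thesis unfolding mp_inverse_def
  proof (rule the_equality)
    show "?X \<in> carrier_mat (dim_col ?A) (dim_row ?A) \<and> ?A * ?X * ?A = ?A \<and> ?X * ?A * ?X = ?X \<and>
       transpose_mat (?A * ?X) = ?A * ?X \<and> transpose_mat (?X * ?A) = ?X * ?A"
      by (auto intro!: eq_matI simp: scalar_prod_def one scalar_pinv_def)
  next
    fix X assume X: "X \<in> carrier_mat (dim_col ?A) (dim_row ?A) \<and> ?A * X * ?A = ?A \<and> X * ?A * X = X \<and>
       transpose_mat (?A * X) = ?A * X \<and> transpose_mat (X * ?A) = X * ?A"
    hence Xc: "X \<in> carrier_mat 1 1" by simp
    have e1: "(?A * X * ?A) $$ (0,0) = ?A $$ (0,0)" using X by simp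
    have e2: "(X * ?A * X) $$ (0,0) = X $$ (0,0)" using X by metis
    have e1': "z * X $$ (0,0) * z = z" using e1 Xc by (simp add: scalar_prod_def)
    have e2': "X $$ (0,0) * z * X $$ (0,0) = X $$ (0,0)" using e2 Xc by (simp add: scalar_prod_def)
    have "X $$ (0,0) = scalar_pinv z"
    proof (cases "z = 0")
      case True thus ?thesis using e2' by (simp add: scalar_pinv_def)
    next
      case False thus ?thesis using e1' by (simp add: scalar_pinv_def field_simps)
    qed
    thus "X = ?X" using Xc by (intro eq_matI, auto simp: one)
  qed
qed

lemma proj_mult_vec:
  fixes M :: "real mat" and th :: "real vec"
  assumes M: "M = mat t t (\<lambda>(a,b). c * ((if a = b then 1 else 0) - 1 / real t))"
    and th: "th \<in> carrier_vec t" and s0: "(\<Sum>i<t. th $ i) = 0" and x: "x < t"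
  shows "(M *\<^sub>v th) $ x = c * th $ x"
proof -
  have "(M *\<^sub>v th) $ x = (\<Sum>b<t. c * ((if x = b then 1 else 0) - 1 / real t) * th $ b)"
    using M th x by (simp add: scalar_prod_def lessThan_atLeast0)
  also have "\<dots> = (\<Sum>b<t. c * (if x = b then th $ b else 0)) - c / real t * (\<Sum>b<t. th $ b)"
  proof -
    have "(\<Sum>b<t. c * ((if x = b then 1 else 0) - 1 / real t) * th $ b)
        = (\<Sum>b<t. c * (if x = b then th $ b else 0) - c / real t * th $ b)"
      by (rule sum.cong[OF refl], simp add: algebra_simps)
    thus ?thesis by (simp add: sum_subtractf sum_distrib_left)
  qed
  also have "\<dots> = c * th $ x" using s0 x by (simp add: sum_distrib_left[symmetric])
  finally show ?thesis .
qed

lemma ell_carrier: "ell lam \<in> carrier_vec 3" "ell3 \<in> carrier_vec 3"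
  by (simp_all only: ell_def ell3_def carrier_vec_def mem_Collect_eq dim_vec_of_list, simp_all)

theorem proposition6:
  fixes k t :: nat and Sig :: "real mat" and p :: "nat list \<Rightarrow> real" and lam :: real
  assumes "k \<ge> 2" and "t \<ge> 2"
    and "pos_def_mat k Sig"
    and "1 + 2 * lam \<noteq> 0"
    and "pseudo_symmetric k t Sig p"
  defines "V \<equiv> Vxi k t Sig p"
  defines "Q3 \<equiv> qform V ell3 ell3"
  defines "qstar \<equiv> qform V (ell lam) (ell lam) - (qform V (ell lam) ell3)^2 * scalar_pinv Q3"
  shows "(\<forall>theta \<in> contrasts t.
           char_poly (Ctilde k t Sig p lam theta) =
             [:0, 1:]
             * [:- (qstar / ((1 + 2 * lam)^2 * (real t - 1))), 1:]
             * [:- (qform V (ell lam) (ell lam) / ((1 + 2 * lam)^2 * (real t - 1))), 1:] ^ (t - 2))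
         \<and> qstar \<le> qform V (ell lam) (ell lam)"
proof -
  note pd = assms(3)
  have k1: "k \<ge> 1" using assms(1) by simp
  have t2: "t \<ge> 2" by fact
  have meas: "is_measure k t p" and CS: "\<And>i j. i \<le> 2 \<Longrightarrow> j \<le> 2 \<Longrightarrow> completely_symmetric t (Cxi k t Sig p i j)"
    using assms(5) unfolding pseudo_symmetric_def by auto
  have tpos: "real t - 1 > 0" using t2 by simp
  have tpos': "real t > 0" using t2 by simp
  have ell_c: "ell lam \<in> carrier_vec 3" "ell3 \<in> carrier_vec 3" by (rule ell_carrier)+
  have Cxi_form: "Cxi k t Sig p i j $$ (a, b) = V $$ (i, j) / (real t - 1) * ((if a = b then 1 else 0) - 1 / real t)"
    if ij: "i < 3" "j < 3" and ab: "a < t" "b < t" for i j a b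
  proof -
    obtain al be where E: "Cxi k t Sig p i j = al \<cdot>\<^sub>m 1\<^sub>m t + be \<cdot>\<^sub>m mat t t (\<lambda>_. 1)"
      using CS[of i j] ij unfolding completely_symmetric_def by auto
    have ent: "Cxi k t Sig p i j $$ (x, y) = al * (if x = y then 1 else 0) + be" if "x < t" "y < t" for x y
      using that by (simp add: E)
    have "0 = (\<Sum>y<t. Cxi k t Sig p i j $$ (0, y))" using Cxi_rowsum[OF pd k1, of 0 t p i j] t2 by simp
    also have "\<dots> = (\<Sum>y<t. al * (if 0 = y then 1 else 0) + be)" using t2 by (intro sum.cong refl, simp add: ent)
    also have "\<dots> = (\<Sum>y<t. (if y = 0 then al else 0) + be)"
      by (rule sum.cong, auto)
    also have "\<dots> = al + real t * be" using t2 by (simp add: sum.distrib)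
    finally have r: "al + real t * be = 0" by simp
    have "V $$ (i, j) = (\<Sum>x<t. Cxi k t Sig p i j $$ (x, x))"
      using ij by (simp add: V_def Vxi_def mtrace_def Cxi_def)
    also have "\<dots> = (\<Sum>x<t. al + be)" by (intro sum.cong refl, simp add: ent)
    also have "\<dots> = real t * (al + be)" by simp
    finally have v: "V $$ (i, j) = real t * (al + be)" .
    have al: "al = V $$ (i, j) / (real t - 1)" using r v tpos by (simp add: field_simps)
    have be: "be = - al / real t" using r tpos' by (simp add: field_simps)
    have "al * (if a = b then 1 else 0) + be = al * ((if a = b then 1 else 0) - 1 / real t)"
      using be by (simp add: algebra_simps)
    thus ?thesis using ent[OF ab] al by simp
  qed
  have Cuw_form: "Cuw k t Sig p u w = mat t t (\<lambda>(a, b). qform V u w / (real t - 1) * ((if a = b then 1 else 0) - 1 / real t))"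
    if u: "u \<in> carrier_vec 3" and w: "w \<in> carrier_vec 3" for u w
  proof (rule eq_matI)
    fix a b assume "a < dim_row (mat t t (\<lambda>(a, b). qform V u w / (real t - 1) * ((if a = b then 1 else 0) - 1 / real t)))"
      "b < dim_col (mat t t (\<lambda>(a, b). qform V u w / (real t - 1) * ((if a = b then 1 else 0) - 1 / real t)))"
    hence ab: "a < t" "b < t" by auto
    have "Cuw k t Sig p u w $$ (a, b) = (\<Sum>i<3. \<Sum>j<3. u $ i * w $ j * V $$ (i, j) * ((if a = b then 1 else 0) - 1 / real t) / (real t - 1))"
      using ab by (simp add: Cuw_def Cxi_form mult.assoc)
    also have "\<dots> = (\<Sum>i<3. \<Sum>j<3. u $ i * w $ j * V $$ (i, j)) * ((if a = b then 1 else 0) - 1 / real t) / (real t - 1)"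
      by (simp add: sum_distrib_right sum_divide_distrib)
    also have "\<dots> = qform V u w / (real t - 1) * ((if a = b then 1 else 0) - 1 / real t)"
      unfolding V_def qform_V[OF pd k1 u w] by simp
    finally show "Cuw k t Sig p u w $$ (a, b) = mat t t (\<lambda>(a, b). qform V u w / (real t - 1) * ((if a = b then 1 else 0) - 1 / real t)) $$ (a, b)"
      using ab by simp
  qed (auto simp: Cuw_def)
  have Q3nn: "Q3 \<ge> 0" unfolding Q3_def V_def by (rule V_psd[OF pd k1 ell_c(2) meas])
  have part2: "qstar \<le> qform V (ell lam) (ell lam)"
  proof -
    have "scalar_pinv Q3 \<ge> 0" using Q3nn by (simp add: scalar_pinv_def)
    hence "(qform V (ell lam) ell3)^2 * scalar_pinv Q3 \<ge> 0" by simp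
    thus ?thesis unfolding qstar_def by simp
  qed
  have part1: "char_poly (Ctilde k t Sig p lam th) =
             [:0, 1:]
             * [:- (qstar / ((1 + 2 * lam)^2 * (real t - 1))), 1:]
             * [:- (qform V (ell lam) (ell lam) / ((1 + 2 * lam)^2 * (real t - 1))), 1:] ^ (t - 2)"
    if thc: "th \<in> contrasts t" for th
  proof -
    have th: "th \<in> carrier_vec t" and s0: "(\<Sum>i<t. th $ i) = 0" and th0: "th \<noteq> 0\<^sub>v t"
      using thc unfolding contrasts_def by auto
    define ka where "ka = qform V (ell lam) ell3 / (real t - 1)"
    define ka3 where "ka3 = Q3 / (real t - 1)"
    define pp where "pp = scalar_pinv (ka3 * (th \<bullet> th))"
    define al where "al = qform V (ell lam) (ell lam) / (real t - 1)"
    define sc where "sc = 1 / (1 + 2 * lam)^2"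
    have mv: "(Cuw k t Sig p u w *\<^sub>v th) $ x = qform V u w / (real t - 1) * th $ x"
      if "u \<in> carrier_vec 3" "w \<in> carrier_vec 3" "x < t" for u w x
      by (rule proj_mult_vec[OF Cuw_form[OF that(1,2)] th s0 that(3)])
    have one: "\<And>i. i < (1::nat) \<longleftrightarrow> i = 0" by auto
    have F: "mat (length [ell3]) t (\<lambda>(a, c). (Cuw k t Sig p (ell lam) ([ell3] ! a) *\<^sub>v th) $ c)
        = mat 1 t (\<lambda>(a, c). ka * th $ c)"
      by (rule eq_matI, auto simp: one mv ell_c ka_def)
    have Cth: "Cuw k t Sig p ell3 ell3 *\<^sub>v th = ka3 \<cdot>\<^sub>v th"
    proof (rule eq_vecI)
      fix i assume "i < dim_vec (ka3 \<cdot>\<^sub>v th)"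
      hence i: "i < t" using th by simp
      show "(Cuw k t Sig p ell3 ell3 *\<^sub>v th) $ i = (ka3 \<cdot>\<^sub>v th) $ i"
        using mv[OF ell_c(2) ell_c(2) i] i th by (simp add: ka3_def Q3_def)
    qed (insert th, simp add: Cuw_def)
    have G: "mat (length [ell3]) (length [ell3]) (\<lambda>(a, b). th \<bullet> (Cuw k t Sig p ([ell3] ! a) ([ell3] ! b) *\<^sub>v th))
        = mat 1 1 (\<lambda>_. ka3 * (th \<bullet> th))"
      by (rule eq_matI, auto simp: one Cth th)
    have Ct: "Ctilde k t Sig p lam th = mat t t (\<lambda>(a, b). (sc * al) * ((if a = b then 1 else 0) - 1 / real t) - (sc * ka * ka * pp) * th $ a * th $ b)"
      unfolding Ctilde_def Ixi_def Let_def F G mp_inverse_1x1 pp_def[symmetric] sc_def[symmetric]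
        Cuw_form[OF ell_c(1) ell_c(1)] al_def[symmetric]
      by (rule eq_matI, auto simp: scalar_prod_def algebra_simps)
    have tt: "th \<bullet> th > 0"
    proof -
      obtain i where i: "i < t" "th $ i \<noteq> 0"
      proof (rule ccontr)
        assume "\<not> thesis"
        hence "\<And>i. i < t \<Longrightarrow> th $ i = 0" using that by blast
        hence "th = 0\<^sub>v t" using th by (intro eq_vecI, auto)
        thus False using th0 by simp
      qed
      have "th \<bullet> th = (\<Sum>j<t. th $ j * th $ j)" using th by (simp add: scalar_prod_def lessThan_atLeast0)
      also have "\<dots> > 0" by (rule sum_pos2[of _ i], insert i, auto simp: zero_less_mult_iff linorder_neq_iff)
      finally show ?thesis .
    qed
    have c1: "sc * al = qform V (ell lam) (ell lam) / ((1 + 2 * lam)^2 * (real t - 1))"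
      by (simp add: sc_def al_def)
    have c2: "sc * al - sc * ka * ka * pp * (th \<bullet> th) = qstar / ((1 + 2 * lam)^2 * (real t - 1))"
    proof (cases "Q3 = 0")
      case True thus ?thesis using c1 by (simp add: pp_def ka3_def scalar_pinv_def qstar_def)
    next
      case False
      hence "ka3 * (th \<bullet> th) \<noteq> 0" using tt tpos by (simp add: ka3_def)
      hence ppe: "pp = 1 / (ka3 * (th \<bullet> th))" by (simp add: pp_def scalar_pinv_def)
      have ka3nz: "ka3 \<noteq> 0" using False tpos by (simp add: ka3_def)
      have s1: "sc * ka * ka * pp * (th \<bullet> th) = sc * (ka * ka / ka3)"
        using tt ka3nz by (simp add: ppe field_simps)
      have s2: "ka * ka / ka3 = (qform V (ell lam) ell3)^2 * scalar_pinv Q3 / (real t - 1)"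
      proof -
        define d where "d = real t - 1"
        define m3 where "m3 = qform V (ell lam) ell3"
        have d: "d \<noteq> 0" using tpos d_def by simp
        have "ka * ka / ka3 = (m3 / d) * (m3 / d) / (Q3 / d)" by (simp add: ka_def ka3_def d_def m3_def)
        also have "\<dots> = m3^2 * (1 / Q3) / d" using d False by (simp add: field_simps power2_eq_square)
        finally show ?thesis using False by (simp add: scalar_pinv_def d_def m3_def)
      qed
      define mm where "mm = (qform V (ell lam) ell3)^2 * scalar_pinv Q3"
      define LL where "LL = qform V (ell lam) (ell lam)"
      have "sc * al - sc * ka * ka * pp * (th \<bullet> th) = sc * (LL - mm) / (real t - 1)"
      proof -
        have "al = LL / (real t - 1)" by (simp add: al_def LL_def)
        thus ?thesis unfolding s1 s2 mm_def[symmetric] by (simp add: diff_divide_distrib right_diff_distrib)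
      qed
      also have "\<dots> = qstar / ((1 + 2 * lam)^2 * (real t - 1))"
        unfolding qstar_def mm_def[symmetric] LL_def[symmetric] by (simp add: sc_def)
      finally show ?thesis .
    qed
    note cp = char_poly_special[OF t2 th s0, of "sc * al" "sc * ka * ka * pp"]
    have e1: "[:- (sc * al - sc * ka * ka * pp * (th \<bullet> th)), 1:] = [:- (qstar / ((1 + 2 * lam)^2 * (real t - 1))), 1:]"
      using c2 by simp
    have e2: "[:- (sc * al), 1:] = [:- (qform V (ell lam) (ell lam) / ((1 + 2 * lam)^2 * (real t - 1))), 1:]"
      using c1 by simp
    show ?thesis unfolding Ct cp e1 e2 by (rule refl)
  qed
  show ?thesis using part1 part2 by blast
qed

end
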